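(* For a one-parameter family $\rho(\theta)=\sum_{k=1}^d p_k(\theta)|w_k(\theta)\rangle\langle w_k(\theta)|$ with a chosen smooth spectral decomposition as in the context, equality $H_{SLD}(\theta)=C_L(\theta)$ holds at $\theta$ if and only if $\langle w_j'(\theta)|w_k(\theta)\rangle=0$ for all $j\neq k$ with $p_j(\theta)>0$ and $p_k(\theta)>0$. In particular, if $\rho(\theta)$ is a pure state then $C_L(\theta)=H_{SLD}(\theta)$.
   Context: Let $I\subseteq\mathbb{R}$ be an open interval and $\rho(\theta)=\sum_{k=1}^d p_k(\theta)|w_k(\theta)\rangle\langle w_k(\theta)|$, $\theta\in I$, where $p_1,\dots,p_d:I\to[0,1]$ are smooth with $\sum_k p_k=1$, and $|w_1(\theta)\rangle,\dots,|w_d(\theta)\rangle$ is an orthonormal basis of $\mathbb{C}^d$ depending smoothly on $\theta$. Write $|w_k'\rangle=\frac{d}{d\theta}|w_k(\theta)\rangle$. Convention: in sums $\sum_i \frac{1}{p_i}(\cdot)^2$, indices with $p_i(\theta)=0$ are omitted. The $C_L$ quantum information is $$C_L(\theta)=\sum_i\frac{1}{p_i}\Big(\frac{dp_i}{d\theta}\Big)^2+4\sum_{j<k}(p_j+p_k)|\langle w_j'|w_k\rangle|^2 .$$ The SLD quantum information is $H_{SLD}(\theta)=\mathrm{tr}\{\rho(\theta)\lambda(\theta)^2\}$, where $\lambda(\theta)$ is any Hermitian solution of $\frac{d\rho}{d\theta}=\frac12(\rho\lambda+\lambda\rho)$. *)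

theory Defs
  imports "HOL-Analysis.Analysis"
begin

fun iter_vderiv :: "nat \<Rightarrow> (real \<Rightarrow> 'a::real_normed_vector) \<Rightarrow> real \<Rightarrow> 'a" where
  "iter_vderiv 0 f = f"
| "iter_vderiv (Suc m) f = (\<lambda>t. vector_derivative (iter_vderiv m f) (at t))"

definition smooth_on :: "real set \<Rightarrow> (real \<Rightarrow> 'a::real_normed_vector) \<Rightarrow> bool" where
  "smooth_on I f \<longleftrightarrow> (\<forall>m. \<forall>t\<in>I. iter_vderiv m f differentiable (at t))"

definition braket :: "complex^'n \<Rightarrow> complex^'n \<Rightarrow> complex" where
  "braket a b = (\<Sum>i\<in>UNIV. cnj (a $ i) * b $ i)"

definition ketbra :: "complex^'n \<Rightarrow> complex^'n \<Rightarrow> complex^'n^'n" where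
  "ketbra a b = (\<chi> i j. a $ i * cnj (b $ j))"

definition hermitian :: "complex^'n^'n \<Rightarrow> bool" where
  "hermitian A \<longleftrightarrow> (\<forall>i j. A $ j $ i = cnj (A $ i $ j))"

definition rho :: "(real \<Rightarrow> 'n::finite \<Rightarrow> real) \<Rightarrow> (real \<Rightarrow> 'n \<Rightarrow> complex^'n) \<Rightarrow> real \<Rightarrow> complex^'n^'n" where
  "rho p w t = (\<Sum>k\<in>UNIV. p t k *\<^sub>R ketbra (w t k) (w t k))"

definition wder :: "(real \<Rightarrow> 'n \<Rightarrow> complex^'n) \<Rightarrow> real \<Rightarrow> 'n \<Rightarrow> complex^'n" where
  "wder w t k = vector_derivative (\<lambda>s. w s k) (at t)"

definition C_L :: "(real \<Rightarrow> 'n::{finite,linorder} \<Rightarrow> real) \<Rightarrow> (real \<Rightarrow> 'n::{finite,linorder} \<Rightarrow> complex^'n::{finite,linorder}) \<Rightarrow> real \<Rightarrow> real" where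
  "C_L p w t =
     (\<Sum>i\<in>{i. p t i \<noteq> 0}. (deriv (\<lambda>s. p s i) t)\<^sup>2 / p t i)
   + 4 * (\<Sum>(j,k)\<in>{(j,k). j < k}. (p t j + p t k) * (cmod (braket (wder w t j) (w t k)))\<^sup>2)"

definition is_SLD :: "(real \<Rightarrow> complex^'n::finite^'n) \<Rightarrow> real \<Rightarrow> complex^'n^'n \<Rightarrow> bool" where
  "is_SLD r t L \<longleftrightarrow> hermitian L \<and>
     vector_derivative r (at t) = (1/2) *\<^sub>R (r t ** L + L ** r t)"

end

theory Submission
  imports Defs
begin


definition hadj :: "complex^'n^'m \<Rightarrow> complex^'m^'n" where
  "hadj A = (\<chi> i j. cnj (A $ j $ i))"

lemma hadj_nth[simp]: "hadj A $ i $ j = cnj (A $ j $ i)"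
  by (simp add: hadj_def)

lemma hadj_mult: "hadj (A ** B) = hadj B ** hadj A"
  by (simp add: vec_eq_iff matrix_matrix_mult_def mult.commute)

lemma hadj_hadj[simp]: "hadj (hadj A) = A"
  by (simp add: vec_eq_iff)

lemma hermitian_hadj: "hermitian A \<longleftrightarrow> hadj A = A"
  unfolding hermitian_def vec_eq_iff hadj_nth by (metis complex_cnj_cnj)

lemma bounded_linear_axis: "bounded_linear (\<lambda>c::'a::real_inner. axis i c)"
proof (rule bounded_linear_intro[where K=1])
  fix x y :: 'a show "axis i (x + y) = axis i x + axis i y"
    by (simp add: axis_def vec_eq_iff)
next
  fix r::real and x :: 'a show "axis i (r *\<^sub>R x) = r *\<^sub>R axis i x"
    by (simp add: axis_def vec_eq_iff)
next
  fix x :: 'a show "norm (axis i x) \<le> norm x * 1"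
    by (simp add: norm_eq_sqrt_inner inner_axis_axis)
qed

lemma vec_sum_axis: "(x::'a::real_inner^'n) = (\<Sum>i\<in>UNIV. axis i (x $ i))"
  by (simp add: vec_eq_iff axis_def)

lemma vd_vec:
  fixes f :: "real \<Rightarrow> 'a::real_inner^'n"
  assumes "\<And>i. ((\<lambda>t. f t $ i) has_vector_derivative g i) F"
  shows "(f has_vector_derivative (\<chi> i. g i)) F"
proof -
  have "((\<lambda>t. \<Sum>i\<in>UNIV. axis i (f t $ i)) has_vector_derivative (\<Sum>i\<in>UNIV. axis i (g i))) F"
    by (intro has_vector_derivative_sum bounded_linear.has_vector_derivative[OF bounded_linear_axis] assms)
  moreover have "(\<lambda>t. \<Sum>i\<in>UNIV. axis i (f t $ i)) = f" by (rule ext, rule vec_sum_axis[symmetric])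
  moreover have "(\<Sum>i\<in>UNIV. axis i (g i)) = (\<chi> i. g i)" by (simp add: vec_eq_iff axis_def)
  ultimately show ?thesis by simp
qed

definition dg :: "('n \<Rightarrow> complex) \<Rightarrow> complex^'n^'n" where
  "dg f = (\<chi> i j. if i = j then f i else 0)"

lemma mult_dg_nth[simp]: "(X ** dg f) $ i $ j = X $ i $ j * f j"
  by (simp add: matrix_matrix_mult_def dg_def if_distrib cong: if_cong)

lemma if_mult0: "(if b then x else (0::'a::semiring_0)) * y = (if b then x * y else 0)"
  by simp

lemma dg_mult_nth[simp]: "(dg f ** X) $ i $ j = f i * X $ i $ j"
  by (simp add: matrix_matrix_mult_def dg_def if_mult0)

lemma mmult_nth: "(X ** Y) $ i $ j = (\<Sum>k\<in>UNIV. X $ i $ k * Y $ k $ j)"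
  by (simp add: matrix_matrix_mult_def)

lemma dg_nth: "dg f $ i $ j = (if i = j then f i else 0)"
  by (simp add: dg_def)

lemma mdgm_nth: "(X ** dg f ** Y) $ i $ j = (\<Sum>k\<in>UNIV. X $ i $ k * f k * Y $ k $ j)"
  by (simp only: mmult_nth[of "X ** dg f"] mult_dg_nth)

lemma matrix_add_rdistrib: "((B + C) ** A) = (B ** A) + (C ** A)"
  by (simp add: vec_eq_iff matrix_matrix_mult_def sum.distrib distrib_right)

lemma braket_cnj: "cnj (braket a b) = braket b a"
  by (simp add: braket_def mult.commute)

lemma inv_cancel_left: "(A::'a::semiring_1^'n^'n) ** B = mat 1 \<Longrightarrow> A ** (B ** C) = C"
  by (metis matrix_mul_assoc matrix_mul_lid)

lemma mult_scaleR_right: "(A::complex^'n^'m) ** (r *\<^sub>R B) = r *\<^sub>R (A ** B)"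
  by (simp add: vec_eq_iff matrix_matrix_mult_def scaleR_sum_right)

lemma mult_scaleR_left: "(r *\<^sub>R (A::complex^'n^'m)) ** B = r *\<^sub>R (A ** B)"
  by (simp add: vec_eq_iff matrix_matrix_mult_def scaleR_sum_right)

lemma sum_pairs:
  fixes f :: "'n::{finite,linorder} \<Rightarrow> 'n \<Rightarrow> 'a::comm_monoid_add"
  shows "(\<Sum>j\<in>UNIV. \<Sum>k\<in>UNIV. f j k) = (\<Sum>j\<in>UNIV. f j j) + (\<Sum>(j,k)\<in>{(j,k). j < k}. f j k + f k j)"
proof -
  have "(\<Sum>j\<in>UNIV. \<Sum>k\<in>UNIV. f j k) = (\<Sum>(j,k)\<in>UNIV. f j k)"
    by (simp add: sum.cartesian_product)
  also have "UNIV = {(j::'n,k). j = k} \<union> ({(j,k). j < k} \<union> {(j,k). k < j})" by auto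
  also have "(\<Sum>(j,k)\<in>{(j,k). j = k} \<union> ({(j,k). j < k} \<union> {(j,k). k < j}). f j k)
     = (\<Sum>(j,k)\<in>{(j,k). j = k}. f j k) + ((\<Sum>(j,k)\<in>{(j,k). j < k}. f j k) + (\<Sum>(j,k)\<in>{(j,k). k < j}. f j k))"
    by (subst sum.union_disjoint, auto, subst sum.union_disjoint, auto)
  also have "(\<Sum>(j,k)\<in>{(j,k). j = k}. f j k) = (\<Sum>j\<in>UNIV. f j j)"
  proof -
    have "{(j,k). j = k} = (\<lambda>j. (j,j)) ` (UNIV::'n set)" by auto
    then show ?thesis by (simp add: sum.reindex inj_on_def)
  qed
  also have "(\<Sum>(j,k)\<in>{(j,k). k < j}. f j k) = (\<Sum>(j,k)\<in>{(j,k). j < k}. f k j)"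
  proof -
    have "{(j,k). k < j} = (\<lambda>(j,k). (k,j)) ` {(j::'n,k). j < k}" by auto
    moreover have "inj_on (\<lambda>(j,k). (k,j)) {(j::'n,k). j < k}" by (auto simp: inj_on_def)
    ultimately show ?thesis by (simp add: sum.reindex case_prod_unfold)
  qed
  finally show ?thesis by (simp add: sum.distrib case_prod_unfold)
qed

lemma pair_ident:
  fixes a b x y :: real
  assumes "a \<ge> 0" "b \<ge> 0" "(a+b)*y = 2*\<bar>a-b\<bar>*x" "y \<ge> 0" "x \<ge> 0"
  shows "a*y^2 + b*y^2 + 16*a*b*x^2/(a+b) = 4*(a+b)*x^2"
proof (cases "a + b = 0")
  case True then have "a = 0" "b = 0" using assms by auto
  then show ?thesis by simp
next
  case False
  then have s: "a + b > 0" using assms by auto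
  have "((a+b)*y)^2 = 4*(a-b)^2*x^2" using assms(3) by (simp add: power_mult_distrib power2_abs)
  then have "(a+b)^2*y^2 = 4*(a-b)^2*x^2" by (simp add: power_mult_distrib)
  then have "(a*y^2 + b*y^2)*(a+b) = 4*(a-b)^2*x^2" by (simp add: power2_eq_square algebra_simps)
  then show ?thesis using s by (simp add: field_simps) (simp add: power2_eq_square algebra_simps)
qed



theorem lemma3:
  fixes I :: "real set" and \<theta> :: real
    and p :: "real \<Rightarrow> 'n::{finite,linorder} \<Rightarrow> real"
    and w :: "real \<Rightarrow> 'n::{finite,linorder} \<Rightarrow> complex^'n::{finite,linorder}"
    and L :: "complex^'n::{finite,linorder}^'n::{finite,linorder}"
  assumes I: "open I" "is_interval I" and th: "\<theta> \<in> I"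
    and p_smooth: "\<And>k. smooth_on I (\<lambda>t. p t k)"
    and p_range: "\<And>t k. t \<in> I \<Longrightarrow> 0 \<le> p t k \<and> p t k \<le> 1"
    and p_sum: "\<And>t. t \<in> I \<Longrightarrow> (\<Sum>k\<in>UNIV. p t k) = 1"
    and w_smooth: "\<And>k. smooth_on I (\<lambda>t. w t k)"
    and w_orth: "\<And>t j k. t \<in> I \<Longrightarrow> braket (w t j) (w t k) = (if j = k then 1 else 0)"
    and SLD: "is_SLD (rho p w) \<theta> L"
  shows "(trace (rho p w \<theta> ** L ** L) = complex_of_real (C_L p w \<theta>)
            \<longleftrightarrow> (\<forall>j k. j \<noteq> k \<and> p \<theta> j > 0 \<and> p \<theta> k > 0 \<longrightarrow> braket (wder w \<theta> j) (w \<theta> k) = 0))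
       \<and> ((\<exists>\<psi>. rho p w \<theta> = ketbra \<psi> \<psi>) \<longrightarrow> trace (rho p w \<theta> ** L ** L) = complex_of_real (C_L p w \<theta>))"
proof -
  define Q where "Q = (\<lambda>k. deriv (\<lambda>s. p s k) \<theta>)"
  define d where "d = (\<lambda>k. wder w \<theta> k)"
  have hp: "((\<lambda>t. p t k) has_vector_derivative Q k) (at \<theta>)" for k
  proof -
    have "(\<lambda>t. p t k) differentiable (at \<theta>)"
      using p_smooth[of k] th unfolding smooth_on_def by (metis iter_vderiv.simps(1))
    then show ?thesis unfolding Q_def
      by (simp add: DERIV_deriv_iff_real_differentiable flip: has_real_derivative_iff_has_vector_derivative)
  qed
  have hw: "((\<lambda>t. w t k) has_vector_derivative d k) (at \<theta>)" for k
  proof -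
    have "(\<lambda>t. w t k) differentiable (at \<theta>)"
      using w_smooth[of k] th unfolding smooth_on_def by (metis iter_vderiv.simps(1))
    then show ?thesis unfolding d_def wder_def by (simp add: vector_derivative_works)
  qed
  have hob: "braket (w \<theta> j) (d k) + braket (d j) (w \<theta> k) = 0" for j k
  proof -
    have D1: "((\<lambda>t. \<Sum>i\<in>UNIV. cnj (w t j $ i) * w t k $ i) has_vector_derivative
         (\<Sum>i\<in>UNIV. cnj (w \<theta> j $ i) * d k $ i + cnj (d j $ i) * w \<theta> k $ i)) (at \<theta>)"
      by (intro has_vector_derivative_sum has_vector_derivative_mult
          bounded_linear.has_vector_derivative[OF bounded_linear_cnj]
          bounded_linear.has_vector_derivative[OF bounded_linear_vec_nth] hw)
    have D2: "((\<lambda>t. \<Sum>i\<in>UNIV. cnj (w t j $ i) * w t k $ i) has_vector_derivative 0) (at \<theta>)"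
      by (rule has_vector_derivative_transform_within_open[OF has_vector_derivative_const I(1) th])
         (use w_orth in \<open>simp add: braket_def\<close>)
    show ?thesis using vector_derivative_unique_at[OF D1 D2]
      by (simp add: braket_def sum.distrib)
  qed
  define R' where "R' = (\<chi> a b. \<Sum>k\<in>UNIV. complex_of_real (p \<theta> k) * (w \<theta> k $ a * cnj (d k $ b) + d k $ a * cnj (w \<theta> k $ b))
          + complex_of_real (Q k) * (w \<theta> k $ a * cnj (w \<theta> k $ b)))"
  have rho_eq: "rho p w = (\<lambda>t. \<chi> a b. \<Sum>k\<in>UNIV. complex_of_real (p t k) * (w t k $ a * cnj (w t k $ b)))"
    by (rule ext) (simp add: rho_def ketbra_def vec_eq_iff, simp add: scaleR_conv_of_real)
  have hR: "(rho p w has_vector_derivative R') (at \<theta>)"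
    unfolding rho_eq R'_def
    apply (rule vd_vec)
    apply (simp only: vec_lambda_beta)
    apply (rule vd_vec)
    apply (simp only: vec_lambda_beta)
    apply (intro has_vector_derivative_sum has_vector_derivative_mult
          bounded_linear.has_vector_derivative[OF bounded_linear_cnj]
          bounded_linear.has_vector_derivative[OF bounded_linear_of_real]
          bounded_linear.has_vector_derivative[OF bounded_linear_vec_nth] hw hp)
    done
  have SLD': "R' = (1/2) *\<^sub>R (rho p w \<theta> ** L + L ** rho p w \<theta>)" and herm: "hermitian L"
    using SLD vector_derivative_at[OF hR] by (auto simp: is_SLD_def)
  define U where "U = (\<chi> a k. w \<theta> k $ a)"
  define V where "V = (\<chi> a k. d k $ a)"
  define P' where "P' = (\<lambda>k. complex_of_real (p \<theta> k))"
  define Qc where "Qc = (\<lambda>k. complex_of_real (Q k))"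
  have M1: "hadj U ** U = mat 1"
    using w_orth[OF th] by (simp add: vec_eq_iff matrix_matrix_mult_def U_def mat_def braket_def)
  have M2: "U ** hadj U = mat 1" using M1 matrix_left_right_inverse by blast
  have M3: "rho p w \<theta> = U ** dg P' ** hadj U"
    by (simp add: vec_eq_iff rho_eq mdgm_nth U_def P'_def mult.commute mult.left_commute)
  have M4: "R' = U ** dg Qc ** hadj U + V ** dg P' ** hadj U + U ** dg P' ** hadj V"
    apply (simp add: vec_eq_iff R'_def mdgm_nth U_def V_def P'_def Qc_def
        sum.distrib[symmetric])
    by (intro allI sum.cong refl) (simp add: algebra_simps)
  define Lh where "Lh = hadj U ** L ** U"
  define \<alpha> where "\<alpha> = (\<lambda>j k. braket (d j) (w \<theta> k))"
  have HL: "hadj U ** R' ** U = dg Qc + hadj U ** V ** dg P' + dg P' ** (hadj V ** U)"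
    unfolding M4 by (simp only: matrix_add_ldistrib matrix_add_rdistrib matrix_mul_assoc[symmetric] matrix_mul_lid inv_cancel_left[OF M1] M1 matrix_mul_rid)
  have HR: "hadj U ** R' ** U = (1/2) *\<^sub>R (dg P' ** Lh + Lh ** dg P')"
    unfolding SLD' M3 Lh_def
    by (simp only: matrix_add_ldistrib matrix_add_rdistrib matrix_mul_assoc[symmetric] matrix_mul_lid inv_cancel_left[OF M1] M1 matrix_mul_rid mult_scaleR_left mult_scaleR_right)
  have UV: "(hadj U ** V) $ j $ k = - \<alpha> j k" for j k
    using hob[of j k] by (simp add: mmult_nth U_def V_def braket_def \<alpha>_def eq_neg_iff_add_eq_0)
  have VU: "(hadj V ** U) $ j $ k = \<alpha> j k" for j k
    by (simp add: mmult_nth U_def V_def braket_def \<alpha>_def)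
  have E: "(if j = k then Qc j else 0) - \<alpha> j k * P' k + P' j * \<alpha> j k
      = complex_of_real (1/2) * (P' j * Lh $ j $ k + Lh $ j $ k * P' k)" for j k
  proof -
    have "(hadj U ** R' ** U) $ j $ k = (hadj U ** R' ** U) $ j $ k" by simp
    then have "(dg Qc + hadj U ** V ** dg P' + dg P' ** (hadj V ** U)) $ j $ k
        = ((1/2) *\<^sub>R (dg P' ** Lh + Lh ** dg P')) $ j $ k"
      using HL HR by simp
    then show ?thesis
      by (simp only: vector_add_component vector_scaleR_component dg_mult_nth mult_dg_nth UV VU dg_nth)
         (simp add: scaleR_conv_of_real)
  qed
  have Lh_herm: "Lh $ k $ j = cnj (Lh $ j $ k)" for j k
  proof -
    have "hadj Lh = Lh" using herm
      by (simp add: Lh_def hadj_mult hermitian_hadj matrix_mul_assoc[symmetric])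
    then show ?thesis by (metis hadj_nth)
  qed
  have tr1: "trace (rho p w \<theta> ** L ** L) = trace (dg P' ** Lh ** Lh)"
  proof -
    have "trace (rho p w \<theta> ** L ** L) = trace (U ** (dg P' ** hadj U ** L ** L))"
      by (simp add: M3 matrix_mul_assoc[symmetric])
    also have "\<dots> = trace (dg P' ** hadj U ** L ** L ** U)" by (rule trace_mul_sym)
    also have "\<dots> = trace (dg P' ** Lh ** Lh)"
      by (simp add: Lh_def matrix_mul_assoc[symmetric] matrix_mul_lid inv_cancel_left[OF M2])
    finally show ?thesis .
  qed
  define Hs where "Hs = (\<Sum>j\<in>UNIV. \<Sum>k\<in>UNIV. p \<theta> j * (cmod (Lh $ j $ k))^2)"
  have tr2: "trace (rho p w \<theta> ** L ** L) = complex_of_real Hs"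
  proof -
    have "trace (dg P' ** Lh ** Lh) = (\<Sum>j\<in>UNIV. \<Sum>k\<in>UNIV. P' j * (Lh $ j $ k * Lh $ k $ j))"
      by (simp only: trace_def mmult_nth[of "dg P' ** Lh"] dg_mult_nth) (simp add: mult.assoc)
    also have "\<dots> = (\<Sum>j\<in>UNIV. \<Sum>k\<in>UNIV. P' j * (Lh $ j $ k * cnj (Lh $ j $ k)))"
      by (simp only: Lh_herm[symmetric])
    also have "\<dots> = complex_of_real Hs"
      by (simp only: complex_norm_square[symmetric] Hs_def P'_def of_real_mult[symmetric] of_real_sum[symmetric])
    finally show ?thesis using tr1 by simp
  qed
  have Pn: "p \<theta> j \<ge> 0" for j using p_range[OF th] by simp
  define f where "f = (\<lambda>j k. p \<theta> j * (cmod (Lh $ j $ k))^2)"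
  define G where "G = (\<lambda>j k. 16 * p \<theta> j * p \<theta> k * (cmod (\<alpha> j k))^2 / (p \<theta> j + p \<theta> k))"
  define S where "S = {(j::'n,k). j < k}"
  have anti: "cnj (\<alpha> k j) = - \<alpha> j k" for j k
    using hob[of j k] braket_cnj[of "d k" "w \<theta> j"] unfolding \<alpha>_def
    by (simp add: eq_neg_iff_add_eq_0)
  have diag: "f j j = (if p \<theta> j \<noteq> 0 then (Q j)^2 / p \<theta> j else 0)" for j
  proof -
    have "complex_of_real (Q j) = complex_of_real (p \<theta> j) * Lh $ j $ j"
      using E[of j j] by (simp add: Qc_def P'_def algebra_simps)
    then have "cmod (complex_of_real (Q j)) = cmod (complex_of_real (p \<theta> j) * Lh $ j $ j)" by (rule arg_cong)
    then have h: "\<bar>Q j\<bar> = p \<theta> j * cmod (Lh $ j $ j)" using Pn[of j] by (simp only: norm_mult norm_of_real)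
    show ?thesis
    proof (cases "p \<theta> j = 0")
      case True then show ?thesis by (simp add: f_def)
    next
      case False
      have "(Q j)^2 = (p \<theta> j * cmod (Lh $ j $ j))^2" using h by (metis power2_abs)
      then show ?thesis using False by (simp add: f_def field_simps power2_eq_square)
    qed
  qed
  have off: "(p \<theta> j + p \<theta> k) * cmod (Lh $ j $ k) = 2 * \<bar>p \<theta> j - p \<theta> k\<bar> * cmod (\<alpha> j k)"
    if "j \<noteq> k" for j k
  proof -
    have "complex_of_real (p \<theta> j - p \<theta> k) * \<alpha> j k = complex_of_real ((p \<theta> j + p \<theta> k) / 2) * Lh $ j $ k"
      using E[of j k] that by (simp add: P'_def algebra_simps)
    then have "cmod (complex_of_real (p \<theta> j - p \<theta> k) * \<alpha> j k) = cmod (complex_of_real ((p \<theta> j + p \<theta> k) / 2) * Lh $ j $ k)"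
      by (rule arg_cong)
    then have "\<bar>p \<theta> j - p \<theta> k\<bar> * cmod (\<alpha> j k) = \<bar>(p \<theta> j + p \<theta> k) / 2\<bar> * cmod (Lh $ j $ k)"
      by (simp only: norm_mult norm_of_real)
    moreover have "\<bar>(p \<theta> j + p \<theta> k) / 2\<bar> = (p \<theta> j + p \<theta> k) / 2" using Pn[of j] Pn[of k] by simp
    ultimately show ?thesis by (simp add: field_simps)
  qed
  have pair: "f j k + f k j + G j k = 4 * (p \<theta> j + p \<theta> k) * (cmod (\<alpha> j k))^2" if "j < k" for j k
  proof -
    have "cmod (Lh $ k $ j) = cmod (Lh $ j $ k)" by (simp only: Lh_herm[of j k] complex_mod_cnj)
    then show ?thesis unfolding f_def G_def
      using pair_ident[OF Pn[of j] Pn[of k] off[of j k]] that by simp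
  qed
  have CL: "C_L p w \<theta> = (\<Sum>i\<in>{i. p \<theta> i \<noteq> 0}. (Q i)^2 / p \<theta> i)
      + 4 * (\<Sum>(j,k)\<in>S. (p \<theta> j + p \<theta> k) * (cmod (\<alpha> j k))^2)"
    by (simp add: C_L_def Q_def \<alpha>_def d_def S_def)
  have dsum: "(\<Sum>i\<in>{i. p \<theta> i \<noteq> 0}. (Q i)^2 / p \<theta> i) = (\<Sum>j\<in>UNIV. f j j)"
    by (simp add: diag sum.If_cases)
  have CL2: "C_L p w \<theta> = Hs + (\<Sum>(j,k)\<in>S. G j k)"
  proof -
    have "4 * (\<Sum>(j,k)\<in>S. (p \<theta> j + p \<theta> k) * (cmod (\<alpha> j k))^2)
        = (\<Sum>(j,k)\<in>S. f j k + f k j + G j k)"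
      unfolding sum_distrib_left by (rule sum.cong) (auto simp: S_def pair mult.assoc)
    also have "\<dots> = (\<Sum>(j,k)\<in>S. f j k + f k j) + (\<Sum>(j,k)\<in>S. G j k)"
      by (simp add: sum.distrib case_prod_unfold)
    finally show ?thesis using CL dsum sum_pairs[of f] by (simp add: Hs_def f_def S_def)
  qed
  have Gnn: "G j k \<ge> 0" for j k using Pn[of j] Pn[of k] by (simp add: G_def)
  have G0: "G j k = 0 \<longleftrightarrow> \<not> (p \<theta> j > 0 \<and> p \<theta> k > 0) \<or> \<alpha> j k = 0" for j k
  proof (cases "p \<theta> j > 0 \<and> p \<theta> k > 0")
    case True then show ?thesis by (simp add: G_def)
  next
    case False then have "p \<theta> j = 0 \<or> p \<theta> k = 0" using Pn[of j] Pn[of k] by auto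
    then show ?thesis using False by (auto simp: G_def)
  qed
  have key: "Hs = C_L p w \<theta> \<longleftrightarrow>
      (\<forall>j k. j \<noteq> k \<and> p \<theta> j > 0 \<and> p \<theta> k > 0 \<longrightarrow> braket (wder w \<theta> j) (w \<theta> k) = 0)"
  proof -
    have fin: "finite S" by simp
    have "Hs = C_L p w \<theta> \<longleftrightarrow> (\<Sum>(j,k)\<in>S. G j k) = 0" using CL2 by auto
    also have "\<dots> \<longleftrightarrow> (\<forall>x\<in>S. (case x of (j,k) \<Rightarrow> G j k) = 0)"
      by (rule sum_nonneg_eq_0_iff[OF fin]) (auto simp: Gnn)
    also have "\<dots> \<longleftrightarrow> (\<forall>j k. j \<noteq> k \<and> p \<theta> j > 0 \<and> p \<theta> k > 0 \<longrightarrow> \<alpha> j k = 0)"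
    proof
      assume A: "\<forall>x\<in>S. (case x of (j,k) \<Rightarrow> G j k) = 0"
      show "\<forall>j k. j \<noteq> k \<and> p \<theta> j > 0 \<and> p \<theta> k > 0 \<longrightarrow> \<alpha> j k = 0"
      proof (intro allI impI)
        fix j k assume jk: "j \<noteq> k \<and> p \<theta> j > 0 \<and> p \<theta> k > 0"
        show "\<alpha> j k = 0"
        proof (cases "j < k")
          case True then show ?thesis using A jk G0[of j k] by (auto simp: S_def)
        next
          case False then have "k < j" using jk by auto
          then have "\<alpha> k j = 0" using A jk G0[of k j] by (auto simp: S_def)
          then show ?thesis using anti[of k j] by simp
        qed
      qed
    next
      assume B: "\<forall>j k. j \<noteq> k \<and> p \<theta> j > 0 \<and> p \<theta> k > 0 \<longrightarrow> \<alpha> j k = 0"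
      show "\<forall>x\<in>S. (case x of (j,k) \<Rightarrow> G j k) = 0"
        using B G0 by (auto simp: S_def)
    qed
    finally show ?thesis by (simp add: \<alpha>_def d_def)
  qed
  have part1: "trace (rho p w \<theta> ** L ** L) = complex_of_real (C_L p w \<theta>)
            \<longleftrightarrow> (\<forall>j k. j \<noteq> k \<and> p \<theta> j > 0 \<and> p \<theta> k > 0 \<longrightarrow> braket (wder w \<theta> j) (w \<theta> k) = 0)"
    using key tr2 by simp
  have part2: "(\<forall>j k. j \<noteq> k \<and> p \<theta> j > 0 \<and> p \<theta> k > 0 \<longrightarrow> braket (wder w \<theta> j) (w \<theta> k) = 0)"
    if "rho p w \<theta> = ketbra \<psi> \<psi>" for \<psi>
  proof -
    define x where "x = (\<lambda>j. braket (w \<theta> j) \<psi>)"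
    have "hadj U ** rho p w \<theta> ** U = dg P'"
      by (simp add: M3 matrix_mul_assoc[symmetric] inv_cancel_left[OF M1] M1 matrix_mul_rid)
    then have e1: "hadj U ** ketbra \<psi> \<psi> ** U = dg P'" using that by simp
    have e2: "(hadj U ** ketbra \<psi> \<psi> ** U) $ j $ k = x j * cnj (x k)" for j k
      unfolding x_def
      by (simp add: mmult_nth ketbra_def U_def braket_def sum_distrib_left sum_distrib_right cnj_sum mult_ac)
    have "\<not> (j \<noteq> k \<and> p \<theta> j > 0 \<and> p \<theta> k > 0)" for j k
    proof
      assume jk: "j \<noteq> k \<and> p \<theta> j > 0 \<and> p \<theta> k > 0"
      have "x j * cnj (x j) = P' j" "x k * cnj (x k) = P' k" "x j * cnj (x k) = 0"
        using e2[of j j] e2[of k k] e2[of j k] jk by (simp_all add: e1 dg_nth)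
      then show False using jk by (auto simp: P'_def)
    qed
    then show ?thesis by blast
  qed
  show ?thesis using part1 part2 by blast
qed

end
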